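(* Let $\mathcal{A}$ and $\mathcal{B}$ be quantum automata over the same alphabet $\Sigma$ and $a,b\in\mathbb{C}$ with $|a|^2+|b|^2=1$. Then for every $w\in\Sigma^\omega$: (1) $|a|^2f^{\mathrm{ND}}_{\mathcal{A}}(w)+|b|^2f^{\mathrm{ND}}_{\mathcal{B}}(w)\ge f^{\mathrm{ND}}_{a\mathcal{A}\oplus b\mathcal{B}}(w)\ge\max\{|a|^2f^{\mathrm{ND}}_{\mathcal{A}}(w),|b|^2f^{\mathrm{ND}}_{\mathcal{B}}(w)\}\ge f^{\mathrm{ND}}_{a\mathcal{A}\oplus b\mathcal{B}}(w)/2$; (2) $f^{\mathrm{ND}}_{\mathcal{A}\otimes\mathcal{B}}(w)\le f^{\mathrm{ND}}_{\mathcal{A}}(w)f^{\mathrm{ND}}_{\mathcal{B}}(w)$; (3) $f^{\mathrm{ND}}_{\mathcal{A}}(w)+f^{\mathrm{ND}}_{\mathcal{A}^\perp}(w)\ge1$, with equality if and only if $\lim_{n\to\infty}f^{\mathrm{MO}}_{\mathcal{A}}(w_n)$ exists.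
   Context: A quantum automaton is a tuple $\mathcal{A}=(\mathcal{H},|s_0\rangle,\Sigma,\{U_\sigma:\sigma\in\Sigma\},F)$ where $\mathcal{H}$ is a finite-dimensional complex Hilbert space, $|s_0\rangle$ a unit vector, $\Sigma$ a finite alphabet, each $U_\sigma$ unitary, and $F$ a subspace with projection $P_F$. For finite $x=\sigma_1\cdots\sigma_m$, $U_x=U_{\sigma_m}\cdots U_{\sigma_1}$ and $f^{\mathrm{MO}}_{\mathcal{A}}(x)=\|P_FU_x|s_0\rangle\|^2$. For $w\in\Sigma^\omega$ with prefixes $w_n$, the non-disturbing run is $|s_n\rangle=U_{w_n}|s_0\rangle$ and $f^{\mathrm{ND}}_{\mathcal{A}}(w)=\sup_{|\psi\rangle}\sup_{\{n_i\}}\inf_{i\ge1}|\langle\psi|s_{n_i}\rangle|^2$ over unit $|\psi\rangle\in F$ and strictly increasing $0\le n_1<n_2<\cdots$. Operations, for $\mathcal{A}=(\mathcal{H}^{\mathcal{A}},|s_0^{\mathcal{A}}\rangle,\Sigma,\{U^{\mathcal{A}}_\sigma\},F^{\mathcal{A}})$ and $\mathcal{B}=(\mathcal{H}^{\mathcal{B}},|s_0^{\mathcal{B}}\rangle,\Sigma,\{U^{\mathcal{B}}_\sigma\},F^{\mathcal{B}})$: the weighted direct sum $a\mathcal{A}\oplus b\mathcal{B}=(\mathcal{H}^{\mathcal{A}}\oplus\mathcal{H}^{\mathcal{B}},a|s_0^{\mathcal{A}}\rangle\oplus b|s_0^{\mathcal{B}}\rangle,\Sigma,\{U^{\mathcal{A}}_\sigma\oplus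 U^{\mathcal{B}}_\sigma\},F^{\mathcal{A}}\oplus F^{\mathcal{B}})$; the tensor product $\mathcal{A}\otimes\mathcal{B}=(\mathcal{H}^{\mathcal{A}}\otimes\mathcal{H}^{\mathcal{B}},|s_0^{\mathcal{A}}\rangle\otimes|s_0^{\mathcal{B}}\rangle,\Sigma,\{U^{\mathcal{A}}_\sigma\otimes U^{\mathcal{B}}_\sigma\},F^{\mathcal{A}}\otimes F^{\mathcal{B}})$; the ortho-complement $\mathcal{A}^\perp$ is $\mathcal{A}$ with $F$ replaced by its orthogonal complement $F^\perp$. *)

theory Defs
  imports "HOL-Analysis.Analysis"
begin

text \<open>Finite-dimensional complex Hilbert spaces are modelled as the spaces
  of functions from a finite (nonempty) index type to the complex numbers,
  with the standard inner product; operators are matrices over the index type.\<close>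

type_synonym 'i cvec = "'i \<Rightarrow> complex"
type_synonym 'i cmat = "'i \<Rightarrow> 'i \<Rightarrow> complex"

definition cinner :: "'i::finite cvec \<Rightarrow> 'i cvec \<Rightarrow> complex" where
  "cinner u v = (\<Sum>i\<in>UNIV. cnj (u i) * v i)"

definition vnorm2 :: "'i::finite cvec \<Rightarrow> real" where
  "vnorm2 v = (\<Sum>i\<in>UNIV. (cmod (v i))^2)"

definition mapply :: "'i::finite cmat \<Rightarrow> 'i cvec \<Rightarrow> 'i cvec" where
  "mapply M v = (\<lambda>i. \<Sum>j\<in>UNIV. M i j * v j)"

definition mmult :: "'i::finite cmat \<Rightarrow> 'i cmat \<Rightarrow> 'i cmat" where
  "mmult M N = (\<lambda>i k. \<Sum>j\<in>UNIV. M i j * N j k)"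

definition adjoint :: "'i cmat \<Rightarrow> 'i cmat" where
  "adjoint M = (\<lambda>i j. cnj (M j i))"

definition idmat :: "'i cmat" where
  "idmat = (\<lambda>i j. if i = j then 1 else 0)"

definition unitary :: "'i::finite cmat \<Rightarrow> bool" where
  "unitary U \<longleftrightarrow> mmult (adjoint U) U = idmat \<and> mmult U (adjoint U) = idmat"

definition csubspace :: "'i cvec set \<Rightarrow> bool" where
  "csubspace F \<longleftrightarrow> (\<lambda>_. 0) \<in> F \<and> (\<forall>u\<in>F. \<forall>v\<in>F. (\<lambda>i. u i + v i) \<in> F)
      \<and> (\<forall>c u. u \<in> F \<longrightarrow> (\<lambda>i. c * u i) \<in> F)"

definition cspan :: "'i cvec set \<Rightarrow> 'i cvec set" where
  "cspan X = \<Inter>{S. csubspace S \<and> X \<subseteq> S}"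

definition orth_compl :: "'i::finite cvec set \<Rightarrow> 'i cvec set" where
  "orth_compl F = {v. \<forall>u\<in>F. cinner u v = 0}"

definition proj :: "'i::finite cvec set \<Rightarrow> 'i cvec \<Rightarrow> 'i cvec" where
  "proj F v = (THE p. p \<in> F \<and> (\<forall>u\<in>F. cinner u (\<lambda>i. v i - p i) = 0))"

record ('i, 's) qa =
  init :: "'i cvec"
  trans :: "'s \<Rightarrow> 'i cmat"
  acc :: "'i cvec set"

definition qa_wf :: "('i::finite, 's::finite) qa \<Rightarrow> bool" where
  "qa_wf A \<longleftrightarrow> vnorm2 (init A) = 1 \<and> (\<forall>\<sigma>. unitary (trans A \<sigma>)) \<and> csubspace (acc A)"

text \<open>U_x |s_0> for a finite word x = sigma_1 ... sigma_m (U_x = U_{sigma_m} ... U_{sigma_1}).\<close>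
definition state :: "('i::finite, 's) qa \<Rightarrow> 's list \<Rightarrow> 'i cvec" where
  "state A x = foldl (\<lambda>s \<sigma>. mapply (trans A \<sigma>) s) (init A) x"

definition f_MO :: "('i::finite, 's) qa \<Rightarrow> 's list \<Rightarrow> real" where
  "f_MO A x = vnorm2 (proj (acc A) (state A x))"

definition prefix :: "(nat \<Rightarrow> 's) \<Rightarrow> nat \<Rightarrow> 's list" where
  "prefix w n = map w [0..<n]"

definition run :: "('i::finite, 's) qa \<Rightarrow> (nat \<Rightarrow> 's) \<Rightarrow> nat \<Rightarrow> 'i cvec" where
  "run A w n = state A (prefix w n)"

text \<open>Non-disturbing value; the supremum over the empty set (trivial F) is taken to be 0.\<close>
definition f_ND :: "('i::finite, 's) qa \<Rightarrow> (nat \<Rightarrow> 's) \<Rightarrow> real" where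
  "f_ND A w = Sup (insert 0
     {Inf (range (\<lambda>i::nat. (cmod (cinner \<psi> (run A w (n i))))^2)) | \<psi> n.
        \<psi> \<in> acc A \<and> vnorm2 \<psi> = 1 \<and> strict_mono (n :: nat \<Rightarrow> nat)})"

definition wdsum :: "complex \<Rightarrow> ('i::finite, 's) qa \<Rightarrow> complex \<Rightarrow> ('j::finite, 's) qa
    \<Rightarrow> ('i + 'j, 's) qa" where
  "wdsum a A b B =
    \<lparr> init = case_sum (\<lambda>i. a * init A i) (\<lambda>j. b * init B j),
      trans = (\<lambda>\<sigma> x y. case (x, y) of
                 (Inl i, Inl i') \<Rightarrow> trans A \<sigma> i i'
               | (Inr j, Inr j') \<Rightarrow> trans B \<sigma> j j'
               | _ \<Rightarrow> 0),
      acc = {case_sum u v | u v. u \<in> acc A \<and> v \<in> acc B} \<rparr>"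

definition tprod :: "('i::finite, 's) qa \<Rightarrow> ('j::finite, 's) qa \<Rightarrow> ('i \<times> 'j, 's) qa" where
  "tprod A B =
    \<lparr> init = (\<lambda>(i, j). init A i * init B j),
      trans = (\<lambda>\<sigma> (i, j) (i', j'). trans A \<sigma> i i' * trans B \<sigma> j j'),
      acc = cspan {(\<lambda>(i, j). u i * v j) | u v. u \<in> acc A \<and> v \<in> acc B} \<rparr>"

definition qa_perp :: "('i::finite, 's) qa \<Rightarrow> ('i, 's) qa" where
  "qa_perp A = A \<lparr> acc := orth_compl (acc A) \<rparr>"

end

theory Submission
  imports Defs
begin

lemma cnj_mult_self: "cnj z * z = (complex_of_real (cmod z))^2"
  using complex_norm_square[of z] by (simp add: mult.commute)

lemma cinner_self: "cinner v v = complex_of_real (vnorm2 v)"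
  unfolding cinner_def vnorm2_def of_real_sum of_real_power
  by (intro sum.cong refl) (rule cnj_mult_self)

lemma vnorm2_nonneg: "vnorm2 v \<ge> 0"
  unfolding vnorm2_def by (simp add: sum_nonneg)

lemma coord_le_vnorm2: "(cmod (v i))^2 \<le> vnorm2 (v::'i::finite cvec)"
  unfolding vnorm2_def by (rule member_le_sum) auto

lemma vnorm2_eq_0: "vnorm2 v = 0 \<longleftrightarrow> v = (\<lambda>_. 0)"
proof
  assume "vnorm2 v = 0"
  then have "\<forall>i. (cmod (v i))^2 = 0"
    using coord_le_vnorm2[of v] by (metis order_antisym zero_le_power2)
  then show "v = (\<lambda>_. 0)" by auto
qed (simp add: vnorm2_def)

lemma cinner_cnj: "cnj (cinner u v) = cinner v u"
  unfolding cinner_def by (simp add: mult.commute)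

lemma cinner_add_right: "cinner u (\<lambda>i. v i + w i) = cinner u v + cinner u w"
  unfolding cinner_def by (simp add: distrib_left sum.distrib)
lemma cinner_add_left: "cinner (\<lambda>i. v i + w i) u = cinner v u + cinner w u"
  unfolding cinner_def by (simp add: distrib_right sum.distrib)
lemma cinner_diff_right: "cinner u (\<lambda>i. v i - w i) = cinner u v - cinner u w"
  unfolding cinner_def by (simp add: right_diff_distrib sum_subtractf)
lemma cinner_diff_left: "cinner (\<lambda>i. v i - w i) u = cinner v u - cinner w u"
  unfolding cinner_def by (simp add: left_diff_distrib sum_subtractf)
lemma cinner_scale_right: "cinner u (\<lambda>i. c * v i) = c * cinner u v"
  unfolding cinner_def by (simp add: sum_distrib_left algebra_simps)
lemma cinner_scale_left: "cinner (\<lambda>i. c * v i) u = cnj c * cinner v u"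
  unfolding cinner_def by (simp add: sum_distrib_left algebra_simps)
lemma cinner_zero_left[simp]: "cinner (\<lambda>_. 0) u = 0"
  unfolding cinner_def by simp
lemma cinner_zero_right[simp]: "cinner u (\<lambda>_. 0) = 0"
  unfolding cinner_def by simp

lemma cinner_CS: "(cmod (cinner u v))^2 \<le> vnorm2 u * vnorm2 v"
proof -
  have "cmod (cinner u v) \<le> (\<Sum>i\<in>UNIV. cmod (u i) * cmod (v i))"
    unfolding cinner_def by (rule order_trans[OF norm_sum]) (simp add: norm_mult)
  then have "(cmod (cinner u v))^2 \<le> (\<Sum>i\<in>UNIV. cmod (u i) * cmod (v i))^2"
    by (simp add: power_mono)
  also have "\<dots> \<le> vnorm2 u * vnorm2 v"
    unfolding vnorm2_def by (rule Cauchy_Schwarz_ineq_sum)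
  finally show ?thesis .
qed

lemma vnorm2_orth_add:
  assumes "cinner p q = 0"
  shows "vnorm2 (\<lambda>i. p i + q i) = vnorm2 p + vnorm2 q"
proof -
  have "cinner q p = 0" using assms cinner_cnj[of p q] by simp
  then have "cinner (\<lambda>i. p i + q i) (\<lambda>i. p i + q i) = cinner p p + cinner q q"
    using assms by (simp add: cinner_add_left cinner_add_right)
  then show ?thesis by (simp add: cinner_self) (metis of_real_add of_real_eq_iff)
qed

lemma csubspace_add: "csubspace F \<Longrightarrow> u \<in> F \<Longrightarrow> v \<in> F \<Longrightarrow> (\<lambda>i. u i + v i) \<in> F"
  unfolding csubspace_def by blast
lemma csubspace_scale: "csubspace F \<Longrightarrow> u \<in> F \<Longrightarrow> (\<lambda>i. c * u i) \<in> F"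
  unfolding csubspace_def by blast
lemma csubspace_zero: "csubspace F \<Longrightarrow> (\<lambda>_. 0) \<in> F"
  unfolding csubspace_def by blast

lemma csubspace_diff:
  assumes "csubspace F" "u \<in> F" "v \<in> F" shows "(\<lambda>i. u i - v i) \<in> F"
proof -
  have "(\<lambda>i. (-1) * v i) \<in> F" by (rule csubspace_scale[OF assms(1,3)])
  then have "(\<lambda>i. u i + (-1) * v i) \<in> F" by (rule csubspace_add[OF assms(1,2)])
  then show ?thesis by simp
qed

lemma proj_exists:
  fixes F :: "'i::finite cvec set"
  assumes F: "csubspace F"
  shows "\<exists>p. p \<in> F \<and> (\<forall>u\<in>F. cinner u (\<lambda>i. v i - p i) = 0)"
proof -
  define T where "T = vec_lambda ` F"
  have sT: "subspace T"
    unfolding subspace_def T_def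
  proof (intro conjI ballI allI)
    show "0 \<in> vec_lambda ` F"
      using F unfolding csubspace_def by (force simp: zero_vec_def)
  next
    fix x y assume "x \<in> vec_lambda ` F" "y \<in> vec_lambda ` F"
    then obtain u u' where "u \<in> F" "u' \<in> F" "x = vec_lambda u" "y = vec_lambda u'" by auto
    moreover have "(\<lambda>i. u i + u' i) \<in> F" using F \<open>u \<in> F\<close> \<open>u' \<in> F\<close> unfolding csubspace_def by blast
    ultimately show "x + y \<in> vec_lambda ` F"
      by (force simp: plus_vec_def)
  next
    fix c :: real and x assume "x \<in> vec_lambda ` F"
    then obtain u where "u \<in> F" "x = vec_lambda u" by auto
    moreover have "(\<lambda>i. complex_of_real c * u i) \<in> F" using F \<open>u \<in> F\<close> unfolding csubspace_def by blast
    ultimately show "c *\<^sub>R x \<in> vec_lambda ` F"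
      by (force simp: scaleR_vec_def scaleR_conv_of_real)
  qed
  then have spT: "span T = T" by (simp add: span_eq_iff)
  obtain y z where y: "y \<in> span T" and z: "\<And>w. w \<in> span T \<Longrightarrow> orthogonal z w"
    and xyz: "vec_lambda v = y + z"
    using orthogonal_subspace_decomp_exists by blast
  define p where "p = vec_nth y"
  have pF: "p \<in> F" using y spT unfolding T_def p_def by (auto simp: vec_lambda_inverse)
  have vp: "(\<lambda>i. v i - p i) = vec_nth z"
    using xyz unfolding p_def by (auto simp: vec_eq_iff)
  have re0: "Re (cinner u (vec_nth z)) = 0" if "u \<in> F" for u
  proof -
    have "orthogonal z (vec_lambda u)" using z that spT unfolding T_def by auto
    then have "inner z (vec_lambda u) = 0" by (simp add: orthogonal_def)
    then show ?thesis
      unfolding cinner_def inner_vec_def inner_complex_def Re_sum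
      by (simp add: algebra_simps)
  qed
  have "cinner u (\<lambda>i. v i - p i) = 0" if "u \<in> F" for u
  proof -
    have "(\<lambda>i. \<i> * u i) \<in> F" using F that unfolding csubspace_def by blast
    then have "Re (cinner (\<lambda>i. \<i> * u i) (vec_nth z)) = 0" by (rule re0)
    then have "Im (cinner u (vec_nth z)) = 0" by (simp add: cinner_scale_left)
    with re0[OF that] show ?thesis unfolding vp by (simp add: complex_eq_iff)
  qed
  with pF show ?thesis by blast
qed

lemma proj_unique:
  assumes F: "csubspace F" and p: "p \<in> F" "\<forall>u\<in>F. cinner u (\<lambda>i. v i - p i) = 0"
  shows "proj F v = p"
  unfolding proj_def
proof (rule the_equality)
  show "p \<in> F \<and> (\<forall>u\<in>F. cinner u (\<lambda>i. v i - p i) = 0)" using p by blast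
next
  fix p' assume p': "p' \<in> F \<and> (\<forall>u\<in>F. cinner u (\<lambda>i. v i - p' i) = 0)"
  define d where "d = (\<lambda>i. p i - p' i)"
  have dF: "d \<in> F" unfolding d_def using csubspace_diff[OF F] p p' by blast
  have "cinner d (\<lambda>i. (v i - p' i) - (v i - p i)) = 0"
    using p p' dF by (simp add: cinner_diff_right)
  moreover have "(\<lambda>i. (v i - p' i) - (v i - p i)) = d" unfolding d_def by auto
  ultimately have "vnorm2 d = 0" by (simp add: cinner_self)
  then show "p' = p" unfolding vnorm2_eq_0 d_def by (auto simp: fun_eq_iff)
qed

lemma proj_props:
  assumes "csubspace F"
  shows "proj F v \<in> F \<and> (\<forall>u\<in>F. cinner u (\<lambda>i. v i - proj F v i) = 0)"
proof -
  obtain p where p: "p \<in> F" "\<forall>u\<in>F. cinner u (\<lambda>i. v i - p i) = 0"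
    using proj_exists[OF assms] by blast
  have "proj F v = p" by (rule proj_unique[OF assms p])
  then show ?thesis using p by simp
qed

lemma proj_in: "csubspace F \<Longrightarrow> proj F v \<in> F"
  using proj_props by blast

lemma proj_orth: "csubspace F \<Longrightarrow> u \<in> F \<Longrightarrow> cinner u (\<lambda>i. v i - proj F v i) = 0"
  using proj_props by blast

lemma proj_inner: "csubspace F \<Longrightarrow> u \<in> F \<Longrightarrow> cinner u v = cinner u (proj F v)"
  using proj_orth[of F u v] by (simp add: cinner_diff_right)

lemma proj_diff:
  assumes F: "csubspace F"
  shows "proj F (\<lambda>i. v i - v' i) = (\<lambda>i. proj F v i - proj F v' i)"
proof (rule proj_unique[OF F])
  show "(\<lambda>i. proj F v i - proj F v' i) \<in> F" using csubspace_diff[OF F] proj_in[OF F] by blast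
  show "\<forall>u\<in>F. cinner u (\<lambda>i. v i - v' i - (proj F v i - proj F v' i)) = 0"
  proof
    fix u assume u: "u \<in> F"
    have "(\<lambda>i. v i - v' i - (proj F v i - proj F v' i)) = (\<lambda>i. (v i - proj F v i) - (v' i - proj F v' i))"
      by (auto simp: algebra_simps)
    then show "cinner u (\<lambda>i. v i - v' i - (proj F v i - proj F v' i)) = 0"
      using proj_orth[OF F u] by (simp add: cinner_diff_right)
  qed
qed

lemma vnorm2_proj:
  assumes F: "csubspace F"
  shows "vnorm2 (proj F v) + vnorm2 (\<lambda>i. v i - proj F v i) = vnorm2 v"
proof -
  have "cinner (proj F v) (\<lambda>i. v i - proj F v i) = 0" using proj_orth[OF F proj_in[OF F]] .
  then have "vnorm2 (\<lambda>i. proj F v i + (v i - proj F v i)) = vnorm2 (proj F v) + vnorm2 (\<lambda>i. v i - proj F v i)"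
    by (rule vnorm2_orth_add)
  then show ?thesis by simp
qed

lemma csubspace_orth: "csubspace (orth_compl F)"
  unfolding csubspace_def orth_compl_def by (simp add: cinner_add_right cinner_scale_right)

lemma resid_orth: "csubspace F \<Longrightarrow> (\<lambda>i. v i - proj F v i) \<in> orth_compl F"
  unfolding orth_compl_def using proj_orth by blast

lemma orth_inner:
  assumes F: "csubspace F" and u: "u \<in> orth_compl F"
  shows "cinner u v = cinner u (\<lambda>i. v i - proj F v i)"
proof -
  have "cinner (proj F v) u = 0" using u proj_in[OF F] unfolding orth_compl_def by blast
  then have "cinner u (proj F v) = 0" using cinner_cnj[of "proj F v" u] by simp
  then show ?thesis by (simp add: cinner_diff_right)
qed

lemma cinner_tendsto:
  assumes "\<forall>i. (\<lambda>k. x k i) \<longlonglongrightarrow> c i"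
  shows "(\<lambda>k. cinner u (x k)) \<longlonglongrightarrow> cinner u c"
  unfolding cinner_def using assms by (intro tendsto_intros) auto

lemma vnorm2_tendsto:
  assumes "\<forall>i. (\<lambda>k. x k i) \<longlonglongrightarrow> c i"
  shows "(\<lambda>k. vnorm2 (x k)) \<longlonglongrightarrow> vnorm2 c"
  unfolding vnorm2_def using assms by (intro tendsto_intros) auto

lemma vnorm2_scale: "vnorm2 (\<lambda>i. c * v i) = (cmod c)^2 * vnorm2 v"
  unfolding vnorm2_def by (simp add: sum_distrib_left norm_mult power_mult_distrib)

lemma cluster:
  fixes s :: "nat \<Rightarrow> 'i::finite cvec"
  assumes "\<forall>n. vnorm2 (s n) \<le> K"
  shows "\<exists>r c. strict_mono r \<and> (\<forall>i. (\<lambda>k. s (r k) i) \<longlonglongrightarrow> c i)"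
proof -
  define f where "f n = vec_lambda (s n)" for n
  have "norm (f n) \<le> sqrt K" for n
  proof -
    have "norm (f n) = sqrt (vnorm2 (s n))"
      unfolding f_def norm_vec_def L2_set_def vnorm2_def by simp
    then show ?thesis using assms by simp
  qed
  then have "bounded (range f)" unfolding bounded_iff by blast
  then obtain l r where r: "strict_mono r" and l: "(f \<circ> r) \<longlonglongrightarrow> l"
    using bounded_imp_convergent_subsequence by blast
  have "(\<lambda>k. s (r k) i) \<longlonglongrightarrow> vec_nth l i" for i
    using tendsto_vec_nth[OF l, of i] unfolding f_def by (simp add: o_def)
  then show ?thesis using r by blast
qed

definition NDset :: "'i::finite cvec set \<Rightarrow> (nat \<Rightarrow> 'i cvec) \<Rightarrow> real set" where
  "NDset F s = {Inf (range (\<lambda>i::nat. (cmod (cinner \<psi> (s (n i))))^2)) | \<psi> n.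
        \<psi> \<in> F \<and> vnorm2 \<psi> = 1 \<and> strict_mono (n :: nat \<Rightarrow> nat)}"

definition ND :: "'i::finite cvec set \<Rightarrow> (nat \<Rightarrow> 'i cvec) \<Rightarrow> real" where
  "ND F s = Sup (insert 0 (NDset F s))"

lemma f_ND_ND: "f_ND A w = ND (acc A) (run A w)"
  unfolding f_ND_def ND_def NDset_def by simp

lemma inf_nonneg: fixes g :: "nat \<Rightarrow> real" assumes "\<And>i. 0 \<le> g i" shows "0 \<le> Inf (range g)"
  by (rule cINF_greatest) (auto simp: assms)

lemma inf_le: fixes g :: "nat \<Rightarrow> real" assumes "\<And>i. 0 \<le> g i" shows "Inf (range g) \<le> g j"
  by (rule cINF_lower) (auto intro!: bdd_belowI[of _ 0] simp: assms)

lemma NDset_le1: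
  assumes hs: "\<forall>n. vnorm2 (s n) \<le> 1" and x: "x \<in> NDset F s" shows "x \<le> 1"
proof -
  obtain \<psi> n where x: "x = Inf (range (\<lambda>i::nat. (cmod (cinner \<psi> (s (n i))))^2))" and p: "vnorm2 \<psi> = 1"
    using x unfolding NDset_def by blast
  have "x \<le> (cmod (cinner \<psi> (s (n 0))))^2" unfolding x by (rule inf_le) simp
  also have "\<dots> \<le> vnorm2 \<psi> * vnorm2 (s (n 0))" by (rule cinner_CS)
  also have "\<dots> \<le> 1" using p hs by simp
  finally show ?thesis .
qed

lemma ND_bdd: "\<forall>n. vnorm2 (s n) \<le> 1 \<Longrightarrow> bdd_above (NDset F s)"
proof -
  assume hs: "\<forall>n. vnorm2 (s n) \<le> 1"
  show "bdd_above (NDset F s)" using NDset_le1[OF hs] by (intro bdd_aboveI[of _ 1]) auto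
qed

lemma ND_nonneg: "\<forall>n. vnorm2 (s n) \<le> 1 \<Longrightarrow> 0 \<le> ND F s"
  unfolding ND_def by (rule cSup_upper) (auto simp: ND_bdd)

lemma ND_upper: "\<forall>n. vnorm2 (s n) \<le> 1 \<Longrightarrow> x \<in> NDset F s \<Longrightarrow> x \<le> ND F s"
  unfolding ND_def by (rule cSup_upper) (auto simp: ND_bdd)

lemma ND_le1: "\<forall>n. vnorm2 (s n) \<le> 1 \<Longrightarrow> ND F s \<le> 1"
  unfolding ND_def by (rule cSup_least) (auto dest: NDset_le1)

lemma ND_least:
  assumes "0 \<le> M"
    and "\<And>\<psi> n. \<psi> \<in> F \<Longrightarrow> vnorm2 \<psi> = 1 \<Longrightarrow> strict_mono n \<Longrightarrow>
           Inf (range (\<lambda>i::nat. (cmod (cinner \<psi> (s (n i))))^2)) \<le> M"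
  shows "ND F s \<le> M"
  unfolding ND_def by (rule cSup_least) (auto simp: NDset_def assms)

lemma ND_lower:
  assumes hs: "\<forall>n. vnorm2 (s n) \<le> 1" and \<psi>: "\<psi> \<in> F" "vnorm2 \<psi> = 1" and r: "strict_mono r"
    and lim: "(\<lambda>i. (cmod (cinner \<psi> (s (r i))))^2) \<longlonglongrightarrow> L"
  shows "L \<le> ND F s"
proof (rule field_le_epsilon)
  fix e :: real assume e: "0 < e"
  from lim e have "eventually (\<lambda>i. dist ((cmod (cinner \<psi> (s (r i))))^2) L < e) sequentially"
    by (rule tendstoD)
  then obtain N where N: "\<And>i. i \<ge> N \<Longrightarrow> dist ((cmod (cinner \<psi> (s (r i))))^2) L < e"
    unfolding eventually_sequentially by blast
  define r' where "r' i = r (i + N)" for i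
  have r': "strict_mono r'" using r unfolding r'_def strict_mono_def by simp
  have "L - e \<le> Inf (range (\<lambda>i::nat. (cmod (cinner \<psi> (s (r' i))))^2))"
  proof (rule cINF_greatest)
    fix i
    have "dist ((cmod (cinner \<psi> (s (r' i))))^2) L < e" using N[of "i + N"] unfolding r'_def by simp
    then show "L - e \<le> (cmod (cinner \<psi> (s (r' i))))^2" unfolding dist_real_def by linarith
  qed simp
  also have "\<dots> \<le> ND F s"
    using hs \<psi> r' by (intro ND_upper) (auto simp: NDset_def)
  finally show "L \<le> ND F s + e" by simp
qed

lemma ND_lower':
  assumes hs: "\<forall>n. vnorm2 (s n) \<le> 1" and F: "csubspace F" and \<psi>: "\<psi> \<in> F" and r: "strict_mono r"
    and lim: "\<forall>i. (\<lambda>k. s (r k) i) \<longlonglongrightarrow> c i"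
  shows "(cmod (cinner \<psi> c))^2 \<le> vnorm2 \<psi> * ND F s"
proof (cases "vnorm2 \<psi> = 0")
  case True
  then have "\<psi> = (\<lambda>_. 0)" by (simp add: vnorm2_eq_0)
  then show ?thesis using ND_nonneg[OF hs] True by simp
next
  case False
  define N where "N = vnorm2 \<psi>"
  have N: "N > 0" using False vnorm2_nonneg[of \<psi>] unfolding N_def by simp
  define k where "k = complex_of_real (1 / sqrt N)"
  define \<phi> where "\<phi> = (\<lambda>i. k * \<psi> i)"
  have \<phi>F: "\<phi> \<in> F" unfolding \<phi>_def by (rule csubspace_scale[OF F \<psi>])
  have ck: "(cmod k)^2 = 1 / N" unfolding k_def norm_of_real using N by (simp add: power_divide)
  have \<phi>1: "vnorm2 \<phi> = 1" unfolding \<phi>_def vnorm2_scale ck N_def using N N_def by simp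
  have "(\<lambda>i. (cmod (cinner \<phi> (s (r i))))^2) \<longlonglongrightarrow> (cmod (cinner \<phi> c))^2"
    by (intro tendsto_intros cinner_tendsto lim)
  then have "(cmod (cinner \<phi> c))^2 \<le> ND F s" by (rule ND_lower[OF hs \<phi>F \<phi>1 r])
  moreover have "(cmod (cinner \<phi> c))^2 = (cmod (cinner \<psi> c))^2 / N"
    unfolding \<phi>_def cinner_scale_left using ck by (simp add: norm_mult power_mult_distrib)
  ultimately show ?thesis using N unfolding N_def[symmetric] by (simp add: field_simps)
qed

lemma run_0: "run A w 0 = init A"
  unfolding run_def state_def prefix_def by simp

lemma run_Suc: "run A w (Suc n) = mapply (trans A (w n)) (run A w n)"
  unfolding run_def state_def prefix_def by simp

lemma mapply_adj: "cinner (mapply M u) v = cinner u (mapply (adjoint M) v)"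
proof -
  have "cinner (mapply M u) v = (\<Sum>i\<in>UNIV. \<Sum>j\<in>UNIV. cnj (M i j) * cnj (u j) * v i)"
    unfolding cinner_def mapply_def by (simp add: sum_distrib_right)
  also have "\<dots> = (\<Sum>j\<in>UNIV. \<Sum>i\<in>UNIV. cnj (M i j) * cnj (u j) * v i)"
    by (rule sum.swap)
  also have "\<dots> = cinner u (mapply (adjoint M) v)"
    unfolding cinner_def mapply_def adjoint_def sum_distrib_left
    by (intro sum.cong refl) (simp add: mult.commute mult.left_commute)
  finally show ?thesis .
qed

lemma mapply_mmult: "mapply M (mapply N v) = mapply (mmult M N) v"
proof (rule ext)
  fix i
  have "mapply M (mapply N v) i = (\<Sum>j\<in>UNIV. \<Sum>k\<in>UNIV. M i j * N j k * v k)"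
    unfolding mapply_def by (simp add: sum_distrib_left mult.assoc)
  also have "\<dots> = (\<Sum>k\<in>UNIV. \<Sum>j\<in>UNIV. M i j * N j k * v k)"
    by (rule sum.swap)
  also have "\<dots> = mapply (mmult M N) v i"
    unfolding mapply_def mmult_def sum_distrib_right ..
  finally show "mapply M (mapply N v) i = mapply (mmult M N) v i" .
qed

lemma mapply_id: "mapply idmat v = v"
proof (rule ext)
  fix x
  have "(\<Sum>j\<in>UNIV. (if x = j then 1 else 0) * v j) = (\<Sum>j\<in>UNIV. if x = j then v j else 0)"
    by (intro sum.cong) auto
  then show "mapply idmat v x = v x" unfolding mapply_def idmat_def by simp
qed

lemma unitary_vnorm2: "unitary U \<Longrightarrow> vnorm2 (mapply U v) = vnorm2 v"
proof -
  assume U: "unitary U"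
  have "cinner (mapply U v) (mapply U v) = cinner v v"
    using U unfolding mapply_adj mapply_mmult unitary_def by (simp add: mapply_id)
  then show ?thesis unfolding cinner_self by simp
qed

lemma run_vnorm2: "qa_wf A \<Longrightarrow> vnorm2 (run A w n) = 1"
  by (induction n) (auto simp: run_0 run_Suc qa_wf_def unitary_vnorm2)

lemma sum_UNIV_sum: "sum g (UNIV :: ('a::finite + 'b::finite) set) = (\<Sum>i\<in>UNIV. g (Inl i)) + (\<Sum>j\<in>UNIV. g (Inr j))"
  using sum.Plus[of "UNIV :: 'a set" "UNIV :: 'b set" g] by (simp add: UNIV_Plus_UNIV o_def)

lemma sum_UNIV_prod: "sum g (UNIV :: ('a::finite \<times> 'b::finite) set) = (\<Sum>i\<in>UNIV. \<Sum>j\<in>UNIV. g (i, j))"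
  by (simp add: sum.cartesian_product UNIV_Times_UNIV[symmetric] del: UNIV_Times_UNIV)

lemma cinner_sum: "cinner (case_sum u v) (case_sum x y) = cinner u x + cinner v y"
  unfolding cinner_def sum_UNIV_sum by simp

lemma vnorm2_sum: "vnorm2 (case_sum u v) = vnorm2 u + vnorm2 v"
  unfolding vnorm2_def sum_UNIV_sum by simp

lemma run_wdsum: "run (wdsum a A b B) w n = case_sum (\<lambda>i. a * run A w n i) (\<lambda>j. b * run B w n j)"
proof (induction n)
  case 0 then show ?case unfolding run_0 by (simp add: wdsum_def)
next
  case (Suc n)
  show ?case
    unfolding run_Suc Suc
    by (rule ext, simp add: mapply_def wdsum_def sum_UNIV_sum sum_distrib_left algebra_simps split: sum.split)
qed

lemma run_tprod: "run (tprod A B) w n = (\<lambda>(i, j). run A w n i * run B w n j)"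
proof (induction n)
  case 0 then show ?case unfolding run_0 by (simp add: tprod_def)
next
  case (Suc n)
  show ?case
    unfolding run_Suc Suc
    by (rule ext, simp add: mapply_def tprod_def sum_UNIV_prod sum_product algebra_simps split: prod.split)
qed

lemma run_perp: "run (qa_perp A) w = run A w"
  unfolding run_def[abs_def] state_def qa_perp_def by simp

lemma acc_perp: "acc (qa_perp A) = orth_compl (acc A)"
  unfolding qa_perp_def by simp

lemma cinner_tensor: "cinner (\<lambda>(i, j). u i * v j) (\<lambda>(i, j). x i * y j) = cinner u x * cinner v y"
  unfolding cinner_def sum_UNIV_prod by (simp add: sum_product algebra_simps)

lemma vnorm2_tensor: "vnorm2 (\<lambda>(i, j). x i * y j) = vnorm2 x * vnorm2 y"
  unfolding vnorm2_def sum_UNIV_prod by (simp add: sum_product norm_mult power_mult_distrib)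

lemma vec_le_ND:
  assumes hs: "\<forall>n. vnorm2 (s n) \<le> 1" and F: "csubspace F" and \<psi>: "\<psi> \<in> F" and r: "strict_mono r"
    and lim: "\<forall>i. (\<lambda>k. s (r k) i) \<longlonglongrightarrow> c i"
    and eq: "cinner \<psi> c = complex_of_real (vnorm2 \<psi>)"
  shows "vnorm2 \<psi> \<le> ND F s"
proof -
  have "(cmod (cinner \<psi> c))^2 \<le> vnorm2 \<psi> * ND F s" by (rule ND_lower'[OF hs F \<psi> r lim])
  then have *: "vnorm2 \<psi> * vnorm2 \<psi> \<le> vnorm2 \<psi> * ND F s"
    unfolding eq norm_of_real using vnorm2_nonneg[of \<psi>] by (simp add: power2_eq_square)
  show ?thesis
  proof (cases "vnorm2 \<psi> = 0")
    case True then show ?thesis using ND_nonneg[OF hs] by simp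
  next
    case False
    then have "vnorm2 \<psi> > 0" using vnorm2_nonneg[of \<psi>] by simp
    with * show ?thesis by simp
  qed
qed

lemma proj_le_ND:
  assumes hs: "\<forall>n. vnorm2 (s n) \<le> 1" and F: "csubspace F" and r: "strict_mono r"
    and lim: "\<forall>i. (\<lambda>k. s (r k) i) \<longlonglongrightarrow> c i"
  shows "vnorm2 (proj F c) \<le> ND F s"
  by (rule vec_le_ND[OF hs F proj_in[OF F] r lim])
     (simp add: proj_inner[OF F proj_in[OF F], of c] cinner_self)

lemma resid_le_ND:
  assumes hs: "\<forall>n. vnorm2 (s n) \<le> 1" and F: "csubspace F" and r: "strict_mono r"
    and lim: "\<forall>i. (\<lambda>k. s (r k) i) \<longlonglongrightarrow> c i"
  shows "vnorm2 (\<lambda>i. c i - proj F c i) \<le> ND (orth_compl F) s"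
proof -
  let ?q = "\<lambda>i. c i - proj F c i"
  have q: "?q \<in> orth_compl F" by (rule resid_orth[OF F])
  have "cinner ?q c = cinner ?q ?q" by (rule orth_inner[OF F q])
  also have "\<dots> = complex_of_real (vnorm2 ?q)" by (rule cinner_self)
  finally have eq: "cinner ?q c = complex_of_real (vnorm2 ?q)" .
  show ?thesis by (rule vec_le_ND[OF hs csubspace_orth q r lim eq])
qed

lemma proj_tendsto:
  assumes F: "csubspace F" and lim: "\<forall>i. (\<lambda>k. x k i) \<longlonglongrightarrow> c i"
  shows "\<forall>i. (\<lambda>k. proj F (x k) i) \<longlonglongrightarrow> proj F c i"
proof
  fix i
  define d where "d k = (\<lambda>i. x k i - c i)" for k
  have "(\<lambda>k. vnorm2 (d k)) \<longlonglongrightarrow> vnorm2 (\<lambda>i. c i - c i)"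
  proof (rule vnorm2_tendsto, rule allI)
    fix i show "(\<lambda>k. d k i) \<longlonglongrightarrow> c i - c i"
      unfolding d_def by (rule tendsto_diff) (use lim in auto)
  qed
  then have "(\<lambda>k. vnorm2 (d k)) \<longlonglongrightarrow> 0" by (simp add: vnorm2_def)
  then have s0: "(\<lambda>k. sqrt (vnorm2 (d k))) \<longlonglongrightarrow> 0" using tendsto_real_sqrt by fastforce
  have "norm (proj F (x k) i - proj F c i) \<le> sqrt (vnorm2 (d k))" for k
  proof -
    have "(cmod (proj F (d k) i))^2 \<le> vnorm2 (proj F (d k))" by (rule coord_le_vnorm2)
    also have "\<dots> \<le> vnorm2 (d k)" using vnorm2_proj[OF F, of "d k"] vnorm2_nonneg[of "\<lambda>i. d k i - proj F (d k) i"] by linarith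
    finally have "cmod (proj F (d k) i) \<le> sqrt (vnorm2 (d k))" by (rule real_le_rsqrt)
    moreover have "proj F (d k) i = proj F (x k) i - proj F c i" unfolding d_def proj_diff[OF F] by simp
    ultimately show ?thesis by simp
  qed
  then have "(\<lambda>k. proj F (x k) i - proj F c i) \<longlonglongrightarrow> 0"
    by (intro Lim_null_comparison[OF _ s0]) auto
  then show "(\<lambda>k. proj F (x k) i) \<longlonglongrightarrow> proj F c i" by (rule LIM_zero_cancel)
qed

lemma tensor_orth1:
  fixes FA :: "'i::finite cvec set" and FB :: "'j::finite cvec set"
  assumes \<psi>: "\<psi> \<in> cspan {(\<lambda>(i, j). u i * v j) | u v. u \<in> FA \<and> v \<in> FB}" and z: "z \<in> orth_compl FA"
  shows "cinner \<psi> (\<lambda>(i, j). z i * y j) = 0"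
proof -
  define S where "S = {\<phi>. \<forall>z\<in>orth_compl FA. \<forall>y::'j cvec. cinner \<phi> (\<lambda>(i, j). z i * y j) = (0::complex)}"
  have "csubspace S" unfolding csubspace_def S_def
    by (simp add: cinner_add_left cinner_scale_left)
  moreover have "{(\<lambda>(i, j). u i * v j) | u v. u \<in> FA \<and> v \<in> FB} \<subseteq> S"
    unfolding S_def orth_compl_def by (auto simp: cinner_tensor)
  ultimately have "cspan {(\<lambda>(i, j). u i * v j) | u v. u \<in> FA \<and> v \<in> FB} \<subseteq> S"
    unfolding cspan_def by blast
  then show ?thesis using \<psi> z unfolding S_def by blast
qed

lemma tensor_orth2:
  fixes FA :: "'i::finite cvec set" and FB :: "'j::finite cvec set"
  assumes \<psi>: "\<psi> \<in> cspan {(\<lambda>(i, j). u i * v j) | u v. u \<in> FA \<and> v \<in> FB}" and z: "z \<in> orth_compl FB"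
  shows "cinner \<psi> (\<lambda>(i, j). y i * z j) = 0"
proof -
  define S where "S = {\<phi>. \<forall>z\<in>orth_compl FB. \<forall>y::'i cvec. cinner \<phi> (\<lambda>(i, j). y i * z j) = (0::complex)}"
  have "csubspace S" unfolding csubspace_def S_def
    by (simp add: cinner_add_left cinner_scale_left)
  moreover have "{(\<lambda>(i, j). u i * v j) | u v. u \<in> FA \<and> v \<in> FB} \<subseteq> S"
    unfolding S_def orth_compl_def by (auto simp: cinner_tensor)
  ultimately have "cspan {(\<lambda>(i, j). u i * v j) | u v. u \<in> FA \<and> v \<in> FB} \<subseteq> S"
    unfolding cspan_def by blast
  then show ?thesis using \<psi> z unfolding S_def by blast
qed

lemma tensor_proj:
  fixes FA :: "'i::finite cvec set" and FB :: "'j::finite cvec set"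
  assumes FA: "csubspace FA" and FB: "csubspace FB"
    and \<psi>: "\<psi> \<in> cspan {(\<lambda>(i, j). u i * v j) | u v. u \<in> FA \<and> v \<in> FB}"
  shows "cinner \<psi> (\<lambda>(i, j). x i * y j) = cinner \<psi> (\<lambda>(i, j). proj FA x i * proj FB y j)"
proof -
  let ?p = "proj FA x" and ?q = "proj FB y"
  have eq: "(\<lambda>(i, j). x i * y j) = (\<lambda>ij. (\<lambda>(i, j). ?p i * ?q j) ij +
      ((\<lambda>(i, j). (x i - ?p i) * y j) ij + (\<lambda>(i, j). ?p i * (y j - ?q j)) ij))"
    by (auto simp: algebra_simps)
  have "cinner \<psi> (\<lambda>(i, j). (x i - ?p i) * y j) = 0"
    using tensor_orth1[OF \<psi> resid_orth[OF FA]] by (simp add: case_prod_unfold)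
  moreover have "cinner \<psi> (\<lambda>(i, j). ?p i * (y j - ?q j)) = 0"
    using tensor_orth2[OF \<psi> resid_orth[OF FB]] by (simp add: case_prod_unfold)
  ultimately show ?thesis unfolding eq cinner_add_right by simp
qed

lemma amgm: "(u::real) * v \<le> ((u + v) / 2)^2"
proof -
  have "((u + v) / 2)^2 - u * v = ((u - v) / 2)^2" by (simp add: power2_eq_square field_simps)
  then show ?thesis using zero_le_power2[of "(u - v) / 2"] by linarith
qed

lemma dsum_ineq:
  fixes x y p q fA fB al be :: real
  assumes "0 \<le> x" "0 \<le> y" "0 \<le> p" "0 \<le> q" "p + q = 1" "x^2 \<le> p * fA" "y^2 \<le> q * fB"
    "0 \<le> al" "0 \<le> be" "0 \<le> fA" "0 \<le> fB"
  shows "(al * x + be * y)^2 \<le> al^2 * fA + be^2 * fB"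
proof -
  have "(al * be * x * y)^2 = (al^2 * x^2) * (be^2 * y^2)" by (simp add: power_mult_distrib)
  also have "\<dots> \<le> (al^2 * (p * fA)) * (be^2 * (q * fB))"
    using assms by (intro mult_mono mult_left_mono) auto
  also have "\<dots> = (al^2 * q * fA) * (be^2 * p * fB)" by simp
  also have "\<dots> \<le> ((al^2 * q * fA + be^2 * p * fB) / 2)^2"
    by (rule amgm)
  finally have sq: "(al * be * x * y)^2 \<le> ((al^2 * q * fA + be^2 * p * fB) / 2)^2" .
  have nn: "0 \<le> (al^2 * q * fA + be^2 * p * fB) / 2" using assms by simp
  have "al * be * x * y \<le> (al^2 * q * fA + be^2 * p * fB) / 2"
    by (rule power2_le_imp_le[OF sq nn])
  moreover have "al^2 * x^2 \<le> al^2 * (p * fA)" "be^2 * y^2 \<le> be^2 * (q * fB)"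
    using assms by (auto intro: mult_left_mono)
  ultimately have "(al * x + be * y)^2 \<le> al^2 * (p * fA) + be^2 * (q * fB) + (al^2 * q * fA + be^2 * p * fB)"
    by (simp add: power2_eq_square algebra_simps)
  also have "\<dots> = al^2 * fA * (p + q) + be^2 * fB * (p + q)" by (simp add: algebra_simps)
  finally show ?thesis using assms by simp
qed

lemma limit_unit:
  assumes hs: "\<forall>n. vnorm2 (s n) = 1" and lim: "\<forall>i. (\<lambda>k. s (r k) i) \<longlonglongrightarrow> c i"
  shows "vnorm2 c = 1"
proof -
  have "(\<lambda>k. vnorm2 (s (r k))) \<longlonglongrightarrow> vnorm2 c" by (rule vnorm2_tendsto[OF lim])
  moreover have "(\<lambda>k. vnorm2 (s (r k))) \<longlonglongrightarrow> 1" using hs by simp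
  ultimately show ?thesis using LIMSEQ_unique by blast
qed

lemma part3_cluster:
  assumes hs: "\<forall>n. vnorm2 (s n) = 1" and F: "csubspace F" and r: "strict_mono r"
    and lim: "\<forall>i. (\<lambda>k. s (r k) i) \<longlonglongrightarrow> c i"
  shows "vnorm2 (proj F c) \<le> ND F s" "1 - vnorm2 (proj F c) \<le> ND (orth_compl F) s"
proof -
  have hs': "\<forall>n. vnorm2 (s n) \<le> 1" using hs by simp
  show "vnorm2 (proj F c) \<le> ND F s" by (rule proj_le_ND[OF hs' F r lim])
  have "vnorm2 (proj F c) + vnorm2 (\<lambda>i. c i - proj F c i) = 1"
    using vnorm2_proj[OF F, of c] limit_unit[OF hs lim] by simp
  then show "1 - vnorm2 (proj F c) \<le> ND (orth_compl F) s"
    using resid_le_ND[OF hs' F r lim] by simp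
qed

lemma part3_ge:
  assumes hs: "\<forall>n. vnorm2 (s n) = 1" and F: "csubspace F"
  shows "1 \<le> ND F s + ND (orth_compl F) s"
proof -
  obtain r c where r: "strict_mono r" and lim: "\<forall>i. (\<lambda>k. s (r k) i) \<longlonglongrightarrow> c i"
    using cluster[of s 1] hs by auto
  show ?thesis using part3_cluster[OF hs F r lim] by simp
qed

lemma part3_eq:
  assumes hs: "\<forall>n. vnorm2 (s n) = 1" and F: "csubspace F"
  shows "ND F s + ND (orth_compl F) s = 1 \<longleftrightarrow> convergent (\<lambda>n. vnorm2 (proj F (s n)))"
proof
  define g where "g n = vnorm2 (proj F (s n))" for n
  have hs': "\<forall>n. vnorm2 (s n) \<le> 1" using hs by simp
  assume sum1: "ND F s + ND (orth_compl F) s = 1"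
  have "g \<longlonglongrightarrow> ND F s"
  proof (rule ccontr)
    assume "\<not> g \<longlonglongrightarrow> ND F s"
    then obtain e where e: "e > 0" and ne: "\<not> eventually (\<lambda>n. dist (g n) (ND F s) < e) sequentially"
      unfolding tendsto_iff by blast
    obtain r :: "nat \<Rightarrow> nat" where r: "strict_mono r" and rne: "\<forall>n::nat. \<not> dist (g (r n)) (ND F s) < e"
      using not_eventually_sequentiallyD[OF ne] by blast
    obtain r' c where r': "strict_mono r'" and lim: "\<forall>i. (\<lambda>k. (s \<circ> r) (r' k) i) \<longlonglongrightarrow> c i"
      using cluster[of "s \<circ> r" 1] hs by auto
    have rr: "strict_mono (r \<circ> r')" using r r' by (rule strict_mono_o)
    have lim2: "\<forall>i. (\<lambda>k. s ((r \<circ> r') k) i) \<longlonglongrightarrow> c i" using lim by simp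
    note pc = part3_cluster[OF hs F rr lim2]
    have eqc: "vnorm2 (proj F c) = ND F s" using pc sum1 by linarith
    have "(\<lambda>k. g (r (r' k))) \<longlonglongrightarrow> vnorm2 (proj F c)"
      unfolding g_def by (rule vnorm2_tendsto[OF proj_tendsto[OF F]]) (use lim in simp)
    then have "eventually (\<lambda>k. dist (g (r (r' k))) (ND F s) < e) sequentially"
      using e unfolding eqc tendsto_iff by blast
    then obtain k where "dist (g (r (r' k))) (ND F s) < e" using eventually_sequentially by auto
    then show False using rne by blast
  qed
  then show "convergent (\<lambda>n. vnorm2 (proj F (s n)))" unfolding g_def convergent_def by blast
next
  define g where "g n = vnorm2 (proj F (s n))" for n
  have hs': "\<forall>n. vnorm2 (s n) \<le> 1" using hs by simp
  assume "convergent (\<lambda>n. vnorm2 (proj F (s n)))"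
  then obtain M where M: "g \<longlonglongrightarrow> M" unfolding g_def convergent_def by blast
  have g01: "0 \<le> g n \<and> g n \<le> 1" for n
    using vnorm2_proj[OF F, of "s n"] hs vnorm2_nonneg[of "proj F (s n)"]
      vnorm2_nonneg[of "\<lambda>i. s n i - proj F (s n) i"] unfolding g_def by simp
  have M0: "0 \<le> M" by (rule LIMSEQ_le_const[OF M]) (use g01 in auto)
  have M1: "M \<le> 1" by (rule LIMSEQ_le_const2[OF M]) (use g01 in auto)
  have "ND F s \<le> M"
  proof (rule ND_least[OF M0])
    fix \<psi> and n :: "nat \<Rightarrow> nat" assume \<psi>: "\<psi> \<in> F" "vnorm2 \<psi> = 1" and n: "strict_mono n"
    have gn: "(\<lambda>i. g (n i)) \<longlonglongrightarrow> M" using LIMSEQ_subseq_LIMSEQ[OF M n] by (simp add: o_def)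
    have "Inf (range (\<lambda>i::nat. (cmod (cinner \<psi> (s (n i))))^2)) \<le> g (n i)" for i
    proof -
      have "Inf (range (\<lambda>i::nat. (cmod (cinner \<psi> (s (n i))))^2)) \<le> (cmod (cinner \<psi> (s (n i))))^2"
        by (rule inf_le) simp
      also have "\<dots> = (cmod (cinner \<psi> (proj F (s (n i)))))^2" using proj_inner[OF F \<psi>(1)] by simp
      also have "\<dots> \<le> vnorm2 \<psi> * g (n i)" unfolding g_def by (rule cinner_CS)
      finally show ?thesis using \<psi> by simp
    qed
    then show "Inf (range (\<lambda>i::nat. (cmod (cinner \<psi> (s (n i))))^2)) \<le> M"
      by (intro LIMSEQ_le_const[OF gn]) auto
  qed
  moreover have "ND (orth_compl F) s \<le> 1 - M"
  proof (rule ND_least)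
    show "0 \<le> 1 - M" using M1 by simp
    fix \<psi> and n :: "nat \<Rightarrow> nat" assume \<psi>: "\<psi> \<in> orth_compl F" "vnorm2 \<psi> = 1" and n: "strict_mono n"
    have gn: "(\<lambda>i. 1 - g (n i)) \<longlonglongrightarrow> 1 - M"
      using LIMSEQ_subseq_LIMSEQ[OF M n] by (auto simp: o_def intro: tendsto_diff)
    have "Inf (range (\<lambda>i::nat. (cmod (cinner \<psi> (s (n i))))^2)) \<le> 1 - g (n i)" for i
    proof -
      have "Inf (range (\<lambda>i::nat. (cmod (cinner \<psi> (s (n i))))^2)) \<le> (cmod (cinner \<psi> (s (n i))))^2"
        by (rule inf_le) simp
      also have "\<dots> = (cmod (cinner \<psi> (\<lambda>j. s (n i) j - proj F (s (n i)) j)))^2"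
        using orth_inner[OF F \<psi>(1)] by simp
      also have "\<dots> \<le> vnorm2 \<psi> * vnorm2 (\<lambda>j. s (n i) j - proj F (s (n i)) j)" by (rule cinner_CS)
      also have "\<dots> = 1 - g (n i)"
        using \<psi> vnorm2_proj[OF F, of "s (n i)"] hs unfolding g_def by simp
      finally show ?thesis .
    qed
    then show "Inf (range (\<lambda>i::nat. (cmod (cinner \<psi> (s (n i))))^2)) \<le> 1 - M"
      by (intro LIMSEQ_le_const[OF gn]) auto
  qed
  ultimately show "ND F s + ND (orth_compl F) s = 1"
    using part3_ge[OF hs F] by simp
qed

lemma joint_cluster:
  fixes sA :: "nat \<Rightarrow> 'i::finite cvec" and sB :: "nat \<Rightarrow> 'j::finite cvec"
  assumes hA: "\<forall>n. vnorm2 (sA n) = 1" and hB: "\<forall>n. vnorm2 (sB n) = 1"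
  shows "\<exists>r cA cB. strict_mono r \<and> (\<forall>i. (\<lambda>k. sA (r k) i) \<longlonglongrightarrow> cA i) \<and> (\<forall>j. (\<lambda>k. sB (r k) j) \<longlonglongrightarrow> cB j)"
proof -
  have "\<forall>k. vnorm2 (case_sum (sA k) (sB k)) \<le> 2" using hA hB by (simp add: vnorm2_sum)
  then obtain r c where r: "strict_mono r" and lim: "\<forall>x. (\<lambda>k. case_sum (sA (r k)) (sB (r k)) x) \<longlonglongrightarrow> c x"
    using cluster[of "\<lambda>k. case_sum (sA k) (sB k)" 2] by blast
  have "\<forall>i. (\<lambda>k. sA (r k) i) \<longlonglongrightarrow> c (Inl i)"
  proof
    fix i
    have "(\<lambda>k. case_sum (sA (r k)) (sB (r k)) (Inl i)) \<longlonglongrightarrow> c (Inl i)" using lim by blast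
    then show "(\<lambda>k. sA (r k) i) \<longlonglongrightarrow> c (Inl i)" by simp
  qed
  moreover have "\<forall>j. (\<lambda>k. sB (r k) j) \<longlonglongrightarrow> c (Inr j)"
  proof
    fix j
    have "(\<lambda>k. case_sum (sA (r k)) (sB (r k)) (Inr j)) \<longlonglongrightarrow> c (Inr j)" using lim by blast
    then show "(\<lambda>k. sB (r k) j) \<longlonglongrightarrow> c (Inr j)" by simp
  qed
  ultimately show ?thesis using r
    by (intro exI[where x=r] exI[where x="\<lambda>i. c (Inl i)"] exI[where x="\<lambda>j. c (Inr j)"]) auto
qed

lemma part2:
  fixes sA :: "nat \<Rightarrow> 'i::finite cvec" and sB :: "nat \<Rightarrow> 'j::finite cvec"
  assumes hA: "\<forall>n. vnorm2 (sA n) = 1" and hB: "\<forall>n. vnorm2 (sB n) = 1"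
    and FA: "csubspace FA" and FB: "csubspace FB"
  shows "ND (cspan {(\<lambda>(i, j). u i * v j) | u v. u \<in> FA \<and> v \<in> FB}) (\<lambda>n. \<lambda>(i, j). sA n i * sB n j)
         \<le> ND FA sA * ND FB sB"
proof (rule ND_least)
  have hA': "\<forall>n. vnorm2 (sA n) \<le> 1" and hB': "\<forall>n. vnorm2 (sB n) \<le> 1" using hA hB by auto
  show "0 \<le> ND FA sA * ND FB sB" using ND_nonneg[OF hA'] ND_nonneg[OF hB'] by simp
  fix \<psi> and n :: "nat \<Rightarrow> nat"
  assume \<psi>: "\<psi> \<in> cspan {(\<lambda>(i, j). u i * v j) | u v. u \<in> FA \<and> v \<in> FB}" "vnorm2 \<psi> = 1"
    and n: "strict_mono n"
  obtain r cA cB where r: "strict_mono r" and limA: "\<forall>i. (\<lambda>k. sA (n (r k)) i) \<longlonglongrightarrow> cA i"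
      and limB: "\<forall>j. (\<lambda>k. sB (n (r k)) j) \<longlonglongrightarrow> cB j"
    using joint_cluster[of "\<lambda>k. sA (n k)" "\<lambda>k. sB (n k)"] hA hB by blast
  have nr: "strict_mono (n \<circ> r)" using n r by (rule strict_mono_o)
  have limA': "\<forall>i. (\<lambda>k. sA ((n \<circ> r) k) i) \<longlonglongrightarrow> cA i" using limA by simp
  have limB': "\<forall>i. (\<lambda>k. sB ((n \<circ> r) k) i) \<longlonglongrightarrow> cB i" using limB by simp
  have limT: "\<forall>p. (\<lambda>k. (\<lambda>(i, j). sA (n (r k)) i * sB (n (r k)) j) p) \<longlonglongrightarrow> (\<lambda>(i, j). cA i * cB j) p"
    using limA limB by (auto intro: tendsto_mult)
  define L where "L = (cmod (cinner \<psi> (\<lambda>(i, j). cA i * cB j)))^2"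
  have hL: "(\<lambda>k. (cmod (cinner \<psi> (\<lambda>(i, j). sA (n (r k)) i * sB (n (r k)) j)))^2) \<longlonglongrightarrow> L"
    unfolding L_def by (intro tendsto_intros cinner_tendsto[OF limT])
  have "Inf (range (\<lambda>i. (cmod (cinner \<psi> ((\<lambda>n. \<lambda>(i, j). sA n i * sB n j) (n i))))^2)) \<le> L"
  proof (rule LIMSEQ_le_const[OF hL], intro exI allI impI)
    fix k
    show "Inf (range (\<lambda>i. (cmod (cinner \<psi> ((\<lambda>n. \<lambda>(i, j). sA n i * sB n j) (n i))))^2))
          \<le> (cmod (cinner \<psi> (\<lambda>(i, j). sA (n (r k)) i * sB (n (r k)) j)))^2"
      using inf_le[of "\<lambda>i. (cmod (cinner \<psi> ((\<lambda>n. \<lambda>(i, j). sA n i * sB n j) (n i))))^2" "r k"] by simp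
  qed
  also have "L = (cmod (cinner \<psi> (\<lambda>(i, j). proj FA cA i * proj FB cB j)))^2"
    unfolding L_def using tensor_proj[OF FA FB \<psi>(1), of cA cB] by simp
  also have "\<dots> \<le> vnorm2 \<psi> * vnorm2 (\<lambda>(i, j). proj FA cA i * proj FB cB j)" by (rule cinner_CS)
  also have "\<dots> = vnorm2 (proj FA cA) * vnorm2 (proj FB cB)" using \<psi> by (simp add: vnorm2_tensor)
  also have "\<dots> \<le> ND FA sA * ND FB sB"
    using proj_le_ND[OF hA' FA nr limA'] proj_le_ND[OF hB' FB nr limB']
      vnorm2_nonneg[of "proj FA cA"] vnorm2_nonneg[of "proj FB cB"]
    by (intro mult_mono) auto
  finally show "Inf (range (\<lambda>i. (cmod (cinner \<psi> ((\<lambda>n. \<lambda>(i, j). sA n i * sB n j) (n i))))^2)) \<le> ND FA sA * ND FB sB" .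
qed

lemma dsum_unit:
  assumes hA: "\<forall>n. vnorm2 (sA n) = 1" and hB: "\<forall>n. vnorm2 (sB n) = 1"
    and ab: "(cmod a)^2 + (cmod b)^2 = 1"
  shows "\<forall>n. vnorm2 (case_sum (\<lambda>i. a * sA n i) (\<lambda>j. b * sB n j)) \<le> 1"
  using assms by (simp add: vnorm2_sum vnorm2_scale)

lemma part1a:
  fixes sA :: "nat \<Rightarrow> 'i::finite cvec" and sB :: "nat \<Rightarrow> 'j::finite cvec"
  assumes hA: "\<forall>n. vnorm2 (sA n) = 1" and hB: "\<forall>n. vnorm2 (sB n) = 1"
    and FA: "csubspace FA" and FB: "csubspace FB" and ab: "(cmod a)^2 + (cmod b)^2 = 1"
  shows "ND {case_sum u v | u v. u \<in> FA \<and> v \<in> FB} (\<lambda>n. case_sum (\<lambda>i. a * sA n i) (\<lambda>j. b * sB n j))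
         \<le> (cmod a)^2 * ND FA sA + (cmod b)^2 * ND FB sB"
proof (rule ND_least)
  have hA': "\<forall>n. vnorm2 (sA n) \<le> 1" and hB': "\<forall>n. vnorm2 (sB n) \<le> 1" using hA hB by auto
  show "0 \<le> (cmod a)^2 * ND FA sA + (cmod b)^2 * ND FB sB" using ND_nonneg[OF hA'] ND_nonneg[OF hB'] by simp
  fix \<psi> and n :: "nat \<Rightarrow> nat"
  assume \<psi>: "\<psi> \<in> {case_sum u v | u v. u \<in> FA \<and> v \<in> FB}" "vnorm2 \<psi> = 1"
    and n: "strict_mono n"
  obtain \<psi>A \<psi>B where \<psi>AB: "\<psi> = case_sum \<psi>A \<psi>B" "\<psi>A \<in> FA" "\<psi>B \<in> FB" using \<psi>(1) by blast
  have pq: "vnorm2 \<psi>A + vnorm2 \<psi>B = 1" using \<psi>(2) \<psi>AB(1) by (simp add: vnorm2_sum)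
  obtain r cA cB where r: "strict_mono r" and limA: "\<forall>i. (\<lambda>k. sA (n (r k)) i) \<longlonglongrightarrow> cA i"
      and limB: "\<forall>j. (\<lambda>k. sB (n (r k)) j) \<longlonglongrightarrow> cB j"
    using joint_cluster[of "\<lambda>k. sA (n k)" "\<lambda>k. sB (n k)"] hA hB by blast
  have nr: "strict_mono (n \<circ> r)" using n r by (rule strict_mono_o)
  have limA': "\<forall>i. (\<lambda>k. sA ((n \<circ> r) k) i) \<longlonglongrightarrow> cA i" using limA by simp
  have limB': "\<forall>i. (\<lambda>k. sB ((n \<circ> r) k) i) \<longlonglongrightarrow> cB i" using limB by simp
  have ci: "cinner \<psi> (case_sum (\<lambda>i. a * sA m i) (\<lambda>j. b * sB m j)) = a * cinner \<psi>A (sA m) + b * cinner \<psi>B (sB m)" for m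
    unfolding \<psi>AB(1) cinner_sum cinner_scale_right ..
  define L where "L = (cmod (a * cinner \<psi>A cA + b * cinner \<psi>B cB))^2"
  have hL: "(\<lambda>k. (cmod (cinner \<psi> (case_sum (\<lambda>i. a * sA (n (r k)) i) (\<lambda>j. b * sB (n (r k)) j))))^2) \<longlonglongrightarrow> L"
    unfolding ci L_def by (intro tendsto_intros cinner_tendsto limA limB)
  have "Inf (range (\<lambda>i. (cmod (cinner \<psi> ((\<lambda>n. case_sum (\<lambda>i. a * sA n i) (\<lambda>j. b * sB n j)) (n i))))^2)) \<le> L"
  proof (rule LIMSEQ_le_const[OF hL], intro exI allI impI)
    fix k
    show "Inf (range (\<lambda>i. (cmod (cinner \<psi> ((\<lambda>n. case_sum (\<lambda>i. a * sA n i) (\<lambda>j. b * sB n j)) (n i))))^2))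
          \<le> (cmod (cinner \<psi> (case_sum (\<lambda>i. a * sA (n (r k)) i) (\<lambda>j. b * sB (n (r k)) j))))^2"
      using inf_le[of "\<lambda>i. (cmod (cinner \<psi> ((\<lambda>n. case_sum (\<lambda>i. a * sA n i) (\<lambda>j. b * sB n j)) (n i))))^2" "r k"] by simp
  qed
  also have "L \<le> (cmod a * cmod (cinner \<psi>A cA) + cmod b * cmod (cinner \<psi>B cB))^2"
    unfolding L_def
    by (rule power_mono) (auto intro: order_trans[OF norm_triangle_ineq] simp: norm_mult)
  also have "\<dots> \<le> (cmod a)^2 * ND FA sA + (cmod b)^2 * ND FB sB"
    by (rule dsum_ineq[where p = "vnorm2 \<psi>A" and q = "vnorm2 \<psi>B"])
       (use pq vnorm2_nonneg ND_nonneg[OF hA'] ND_nonneg[OF hB']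
          ND_lower'[OF hA' FA \<psi>AB(2) nr limA'] ND_lower'[OF hB' FB \<psi>AB(3) nr limB'] in auto)
  finally show "Inf (range (\<lambda>i. (cmod (cinner \<psi> ((\<lambda>n. case_sum (\<lambda>i. a * sA n i) (\<lambda>j. b * sB n j)) (n i))))^2))
     \<le> (cmod a)^2 * ND FA sA + (cmod b)^2 * ND FB sB" .
qed

lemma part1b_gen:
  fixes s :: "nat \<Rightarrow> 'i::finite cvec" and t :: "nat \<Rightarrow> 'j::finite cvec"
  assumes hs: "\<forall>n. vnorm2 (s n) = 1" and ht: "\<forall>n. vnorm2 (t n) \<le> 1"
    and emb: "\<And>\<psi>. \<psi> \<in> F \<Longrightarrow> vnorm2 \<psi> = 1 \<Longrightarrow> \<exists>\<phi>. \<phi> \<in> G \<and> vnorm2 \<phi> = 1 \<and>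
                 (\<forall>m. cinner \<phi> (t m) = a * cinner \<psi> (s m))"
  shows "(cmod a)^2 * ND F s \<le> ND G t"
proof (cases "a = 0")
  case True then show ?thesis using ND_nonneg[OF ht] by simp
next
  case False
  then have a: "(cmod a)^2 > 0" by simp
  have "ND F s \<le> ND G t / (cmod a)^2"
  proof (rule ND_least)
    show "0 \<le> ND G t / (cmod a)^2" using ND_nonneg[OF ht] by simp
    fix \<psi> and n :: "nat \<Rightarrow> nat" assume \<psi>: "\<psi> \<in> F" "vnorm2 \<psi> = 1" and n: "strict_mono n"
    obtain \<phi> where \<phi>: "\<phi> \<in> G" "vnorm2 \<phi> = 1" and eq: "\<forall>m. cinner \<phi> (t m) = a * cinner \<psi> (s m)"
      using emb[OF \<psi>] by blast
    have "(cmod a)^2 * Inf (range (\<lambda>i. (cmod (cinner \<psi> (s (n i))))^2))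
          \<le> Inf (range (\<lambda>i. (cmod (cinner \<phi> (t (n i))))^2))"
    proof (rule cINF_greatest)
      fix i
      have "(cmod a)^2 * Inf (range (\<lambda>i. (cmod (cinner \<psi> (s (n i))))^2)) \<le> (cmod a)^2 * (cmod (cinner \<psi> (s (n i))))^2"
        by (rule mult_left_mono[OF inf_le]) auto
      also have "\<dots> = (cmod (cinner \<phi> (t (n i))))^2" using eq by (simp add: norm_mult power_mult_distrib)
      finally show "(cmod a)^2 * Inf (range (\<lambda>i. (cmod (cinner \<psi> (s (n i))))^2)) \<le> (cmod (cinner \<phi> (t (n i))))^2" .
    qed simp
    also have "\<dots> \<le> ND G t"
      using \<phi> n by (intro ND_upper[OF ht]) (auto simp: NDset_def)
    finally show "Inf (range (\<lambda>i. (cmod (cinner \<psi> (s (n i))))^2)) \<le> ND G t / (cmod a)^2"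
      using a by (simp add: field_simps)
  qed
  then show ?thesis using a by (simp add: field_simps)
qed

lemma part1b:
  fixes sA :: "nat \<Rightarrow> 'i::finite cvec" and sB :: "nat \<Rightarrow> 'j::finite cvec"
  assumes hA: "\<forall>n. vnorm2 (sA n) = 1" and hB: "\<forall>n. vnorm2 (sB n) = 1"
    and FA: "csubspace FA" and FB: "csubspace FB" and ab: "(cmod a)^2 + (cmod b)^2 = 1"
  shows "(cmod a)^2 * ND FA sA \<le> ND {case_sum u v | u v. u \<in> FA \<and> v \<in> FB} (\<lambda>n. case_sum (\<lambda>i. a * sA n i) (\<lambda>j. b * sB n j))"
    "(cmod b)^2 * ND FB sB \<le> ND {case_sum u v | u v. u \<in> FA \<and> v \<in> FB} (\<lambda>n. case_sum (\<lambda>i. a * sA n i) (\<lambda>j. b * sB n j))"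
proof -
  have z: "vnorm2 (\<lambda>_. 0 :: complex) = 0" by (simp add: vnorm2_def)
  note ht = dsum_unit[OF hA hB ab]
  show "(cmod a)^2 * ND FA sA \<le> ND {case_sum u v | u v. u \<in> FA \<and> v \<in> FB} (\<lambda>n. case_sum (\<lambda>i. a * sA n i) (\<lambda>j. b * sB n j))"
  proof (rule part1b_gen[OF hA ht])
    fix \<psi> assume \<psi>: "\<psi> \<in> FA" "vnorm2 \<psi> = 1"
    show "\<exists>\<phi>. \<phi> \<in> {case_sum u v | u v. u \<in> FA \<and> v \<in> FB} \<and> vnorm2 \<phi> = 1 \<and>
                 (\<forall>m. cinner \<phi> (case_sum (\<lambda>i. a * sA m i) (\<lambda>j. b * sB m j)) = a * cinner \<psi> (sA m))"
      using \<psi> csubspace_zero[OF FB] z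
      by (intro exI[where x="case_sum \<psi> (\<lambda>_. 0)"]) (auto simp: vnorm2_sum cinner_sum cinner_scale_right)
  qed
  show "(cmod b)^2 * ND FB sB \<le> ND {case_sum u v | u v. u \<in> FA \<and> v \<in> FB} (\<lambda>n. case_sum (\<lambda>i. a * sA n i) (\<lambda>j. b * sB n j))"
  proof (rule part1b_gen[OF hB ht])
    fix \<psi> assume \<psi>: "\<psi> \<in> FB" "vnorm2 \<psi> = 1"
    show "\<exists>\<phi>. \<phi> \<in> {case_sum u v | u v. u \<in> FA \<and> v \<in> FB} \<and> vnorm2 \<phi> = 1 \<and>
                 (\<forall>m. cinner \<phi> (case_sum (\<lambda>i. a * sA m i) (\<lambda>j. b * sB m j)) = b * cinner \<psi> (sB m))"
      using \<psi> csubspace_zero[OF FA] z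
      by (intro exI[where x="case_sum (\<lambda>_. 0) \<psi>"]) (auto simp: vnorm2_sum cinner_sum cinner_scale_right)
  qed
qed

theorem proposition3:
  fixes A :: "('i::finite, 's::finite) qa" and B :: "('j::finite, 's) qa"
    and a b :: complex and w :: "nat \<Rightarrow> 's"
  assumes "qa_wf A" and "qa_wf B" and "(cmod a)^2 + (cmod b)^2 = 1"
  shows "((cmod a)^2 * f_ND A w + (cmod b)^2 * f_ND B w \<ge> f_ND (wdsum a A b B) w
       \<and> f_ND (wdsum a A b B) w \<ge> max ((cmod a)^2 * f_ND A w) ((cmod b)^2 * f_ND B w)
       \<and> max ((cmod a)^2 * f_ND A w) ((cmod b)^2 * f_ND B w) \<ge> f_ND (wdsum a A b B) w / 2)
     \<and> f_ND (tprod A B) w \<le> f_ND A w * f_ND B w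
     \<and> f_ND A w + f_ND (qa_perp A) w \<ge> 1
     \<and> (f_ND A w + f_ND (qa_perp A) w = 1 \<longleftrightarrow> convergent (\<lambda>n. f_MO A (prefix w n)))"
proof -
  have hA: "\<forall>n. vnorm2 (run A w n) = 1" using run_vnorm2[OF assms(1)] by blast
  have hB: "\<forall>n. vnorm2 (run B w n) = 1" using run_vnorm2[OF assms(2)] by blast
  have FA: "csubspace (acc A)" using assms(1) unfolding qa_wf_def by blast
  have FB: "csubspace (acc B)" using assms(2) unfolding qa_wf_def by blast
  have eD: "f_ND (wdsum a A b B) w = ND {case_sum u v |u v. u \<in> acc A \<and> v \<in> acc B}
      (\<lambda>n. case_sum (\<lambda>i. a * run A w n i) (\<lambda>j. b * run B w n j))"
  proof -
    have "run (wdsum a A b B) w = (\<lambda>n. case_sum (\<lambda>i. a * run A w n i) (\<lambda>j. b * run B w n j))"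
      by (rule ext) (rule run_wdsum)
    moreover have "acc (wdsum a A b B) = {case_sum u v |u v. u \<in> acc A \<and> v \<in> acc B}"
      by (simp add: wdsum_def)
    ultimately show ?thesis by (simp add: f_ND_ND)
  qed
  have eT: "f_ND (tprod A B) w = ND (cspan {(\<lambda>(i, j). u i * v j) | u v. u \<in> acc A \<and> v \<in> acc B})
      (\<lambda>n. \<lambda>(i, j). run A w n i * run B w n j)"
  proof -
    have "run (tprod A B) w = (\<lambda>n. \<lambda>(i, j). run A w n i * run B w n j)"
      by (rule ext) (rule run_tprod)
    moreover have "acc (tprod A B) = cspan {(\<lambda>(i, j). u i * v j) | u v. u \<in> acc A \<and> v \<in> acc B}"
      by (simp add: tprod_def)
    ultimately show ?thesis by (simp add: f_ND_ND)
  qed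
  have eP: "f_ND (qa_perp A) w = ND (orth_compl (acc A)) (run A w)"
    by (simp add: f_ND_ND run_perp acc_perp)
  have eM: "(\<lambda>n. f_MO A (prefix w n)) = (\<lambda>n. vnorm2 (proj (acc A) (run A w n)))"
    by (simp add: f_MO_def run_def)
  note p1a = part1a[OF hA hB FA FB assms(3)]
  note p1b = part1b[OF hA hB FA FB assms(3)]
  note p2 = part2[OF hA hB FA FB]
  note p3 = part3_ge[OF hA FA] part3_eq[OF hA FA]
  show ?thesis
    unfolding eD eT eP eM f_ND_ND[of A] f_ND_ND[of B]
    using p1a p1b p2 p3 by linarith
qed

end
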